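(* For all constants $c_1,c_2$ with $0<c_1\le c_2<1$, for all sufficiently large $n$ with $t\le c_2 n$, and for all $k$ with $c_1 n\le k\le c_2 n$, the probability that the reverse reachable set of $B$ has exactly $k$ vertices is at most $\frac{1}{n^2}$.
   Context: Random graph model: $V$ is a set of $n$ vertices, $B\subseteq V$ a target set with $|B|=t$, each $v\in V$ has a prescribed out-degree $d_v$ with $2\le d_{\min}\le d_v\le d_{\max}$ (constants independent of $n$), and for each $v$ independently its out-neighbour set is chosen uniformly at random among all $d_v$-element subsets of $V$. The reverse reachable set of $B$ is the set of vertices having a directed path to a vertex of $B$. *)

theory Defs
  imports "HOL-Probability.Probability"
begin

text \<open>Outside V the out-neighbour set is the empty set.\<close>
definition out_nbhd_pmf :: "nat set \<Rightarrow> (nat \<Rightarrow> nat) \<Rightarrow> (nat \<Rightarrow> nat set) pmf" where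
  "out_nbhd_pmf V d = Pi_pmf V {} (\<lambda>v. pmf_of_set {S. S \<subseteq> V \<and> card S = d v})"

definition edges :: "nat set \<Rightarrow> (nat \<Rightarrow> nat set) \<Rightarrow> (nat \<times> nat) set" where
  "edges V N = {(x, y). x \<in> V \<and> y \<in> N x}"

definition reverse_reachable :: "nat set \<Rightarrow> (nat \<Rightarrow> nat set) \<Rightarrow> nat set \<Rightarrow> nat set" where
  "reverse_reachable V N B = {u \<in> V. \<exists>b\<in>B. (u, b) \<in> (edges V N)\<^sup>*}"

end

theory Submission imports Defs "HOL-Real_Asymp.Real_Asymp" begin

lemma binom_ratio:
  fixes a n d :: nat
  assumes "a \<le> n" "2 \<le> d"
  shows "real (a choose d) * real n ^ 2 \<le> real (n choose d) * real a ^ 2"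
  using assms(2)
proof (induction d rule: dec_induct)
  case base
  have ha: "real (a choose 2) = real a * (real a - 1) / 2"
  proof -
    have "2 * (a choose 2) = a * (a - 1)" using times_binomial_minus1_eq[of 2 a] by simp
    hence "2 * real (a choose 2) = real a * real (a - 1)" by (metis of_nat_mult of_nat_numeral)
    thus ?thesis by (cases a) auto
  qed
  have hn: "real (n choose 2) = real n * (real n - 1) / 2"
  proof -
    have "2 * (n choose 2) = n * (n - 1)" using times_binomial_minus1_eq[of 2 n] by simp
    hence "2 * real (n choose 2) = real n * real (n - 1)" by (metis of_nat_mult of_nat_numeral)
    thus ?thesis by (cases n) auto
  qed
  have hi: "real a * (real a - 1) / 2 * real n ^ 2 \<le> real n * (real n - 1) / 2 * real a ^ 2"
  proof -
    have "real a \<le> real n" using assms by simp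
    hence "(real a - 1) * real n \<le> (real n - 1) * real a" by (simp add: algebra_simps)
    hence "real a * real n * ((real a - 1) * real n) \<le> real a * real n * ((real n - 1) * real a)"
      by (intro mult_left_mono) auto
    hence "real a * real n * ((real a - 1) * real n) / 2 \<le> real a * real n * ((real n - 1) * real a) / 2"
      by (rule divide_right_mono) simp
    moreover have "real a * (real a - 1) / 2 * real n ^ 2 = real a * real n * ((real a - 1) * real n) / 2"
      by (simp add: power2_eq_square)
    moreover have "real n * (real n - 1) / 2 * real a ^ 2 = real a * real n * ((real n - 1) * real a) / 2"
      by (simp add: power2_eq_square)
    ultimately show ?thesis by linarith
  qed
  show ?case unfolding ha hn using hi .
next
  case (step m)
  have ea: "real (a choose Suc m) * real (Suc m) = real (a choose m) * (real a - real m)"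
  proof (cases "m \<le> a")
    case True
    have "(a - m) * (a choose m) = (a choose Suc m) * Suc m"
    proof (cases a)
      case 0 then show ?thesis using True by simp
    next
      case (Suc a')
      have "(a choose Suc m) * Suc m = a * (a' choose m)"
        using Suc_times_binomial[of m a'] Suc by (simp add: mult.commute)
      also have "a * (a' choose m) = (a - m) * (a choose m)"
        using Suc True
        by (metis binomial_absorb_comp diff_Suc_1)
      finally show ?thesis by simp
    qed
    hence "real (a - m) * real (a choose m) = real (a choose Suc m) * real (Suc m)"
      by (metis of_nat_mult)
    thus ?thesis using True by (simp add: of_nat_diff mult.commute)
  next
    case False
    then show ?thesis by (simp add: binomial_eq_0)
  qed
  have en: "real (n choose Suc m) * real (Suc m) = real (n choose m) * (real n - real m)"
  proof (cases "m \<le> n")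
    case True
    have "(n - m) * (n choose m) = (n choose Suc m) * Suc m"
    proof (cases n)
      case 0 then show ?thesis using True by simp
    next
      case (Suc a')
      have "(n choose Suc m) * Suc m = n * (a' choose m)"
        using Suc_times_binomial[of m a'] Suc by (simp add: mult.commute)
      also have "n * (a' choose m) = (n - m) * (n choose m)"
        using Suc True
        by (metis binomial_absorb_comp diff_Suc_1)
      finally show ?thesis by simp
    qed
    hence "real (n - m) * real (n choose m) = real (n choose Suc m) * real (Suc m)"
      by (metis of_nat_mult)
    thus ?thesis using True by (simp add: of_nat_diff mult.commute)
  next
    case False
    then show ?thesis by (simp add: binomial_eq_0)
  qed
  show ?case
  proof (cases "m \<le> a")
    case False
    then show ?thesis by (simp add: binomial_eq_0)
  next
    case True
    have an: "real a \<le> real n" using assms by simp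
    have "real (a choose Suc m) * real n ^ 2 * real (Suc m) = (real (a choose Suc m) * real (Suc m)) * real n ^ 2"
      by (simp only: mult_ac)
    also have "\<dots> = real (a choose m) * (real a - real m) * real n ^ 2" by (simp only: ea)
    also have "\<dots> = real (a choose m) * real n ^ 2 * (real a - real m)" by (simp only: mult_ac)
    also have "\<dots> \<le> real (n choose m) * real a ^ 2 * (real a - real m)"
      using step.IH True by (intro mult_right_mono) auto
    also have "\<dots> \<le> real (n choose m) * real a ^ 2 * (real n - real m)"
      using an by (intro mult_left_mono) auto
    also have "\<dots> = real (n choose m) * (real n - real m) * real a ^ 2" by (simp only: mult_ac)
    also have "\<dots> = (real (n choose Suc m) * real (Suc m)) * real a ^ 2" by (simp only: en)
    also have "\<dots> = real (n choose Suc m) * real a ^ 2 * real (Suc m)" by (simp only: mult_ac)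
    finally show ?thesis by simp
  qed
qed

lemma prob_avoid:
  assumes "finite V" "S \<subseteq> V" "d \<le> card V"
  shows "measure_pmf.prob (pmf_of_set {T. T \<subseteq> V \<and> card T = d}) {T. T \<inter> S = {}}
     = real ((card V - card S) choose d) / real (card V choose d)"
proof -
  have fin: "finite {T. T \<subseteq> V \<and> card T = d}" using assms(1) by auto
  have c: "card {T. T \<subseteq> V \<and> card T = d} = card V choose d" using n_subsets[OF assms(1)] .
  hence ne: "{T. T \<subseteq> V \<and> card T = d} \<noteq> {}" using assms(3)
    by (metis card.empty zero_less_binomial less_irrefl)
  have e: "{T. T \<subseteq> V \<and> card T = d} \<inter> {T. T \<inter> S = {}} = {T. T \<subseteq> V - S \<and> card T = d}" by auto
  have "card {T. T \<subseteq> V - S \<and> card T = d} = card (V - S) choose d"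
    using n_subsets[of "V - S" d] assms(1) by auto
  moreover have "card (V - S) = card V - card S"
    using assms by (meson card_Diff_subset finite_subset)
  ultimately show ?thesis
    using measure_pmf_of_set[OF ne fin] e c by simp
qed

lemma gen_bound:
  fixes a :: "nat \<Rightarrow> real" and l :: real
  assumes "finite M" "\<forall>v\<in>M. 0 \<le> a v \<and> a v \<le> 1" "1 \<le> l"
  shows "(\<Sum>T\<in>{T. T \<subseteq> M \<and> card T = r}. (\<Prod>v\<in>T. a v) * (\<Prod>v\<in>M-T. 1 - a v))
     \<le> (\<Prod>v\<in>M. l * a v + (1 - a v)) / l ^ r"
proof -
  define g where "g T = (\<Prod>v\<in>T. a v) * (\<Prod>v\<in>M-T. 1 - a v)" for T
  have gnn: "0 \<le> g T" if "T \<subseteq> M" for T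
    unfolding g_def using assms(2) that by (intro mult_nonneg_nonneg prod_nonneg) auto
  have "(\<Sum>T\<in>{T. T \<subseteq> M \<and> card T = r}. g T) = (\<Sum>T\<in>{T. T \<subseteq> M \<and> card T = r}. l ^ card T / l ^ r * g T)"
    using assms(3) by (intro sum.cong) auto
  also have "\<dots> \<le> (\<Sum>T\<in>Pow M. l ^ card T / l ^ r * g T)"
    using assms(1,3) gnn by (intro sum_mono2) auto
  also have "\<dots> = (\<Sum>T\<in>Pow M. (\<Prod>v\<in>T. l * a v) * (\<Prod>v\<in>M-T. 1 - a v)) / l ^ r"
    unfolding sum_divide_distrib g_def
  proof (intro sum.cong refl)
    fix T assume "T \<in> Pow M"
    hence "finite T" using assms(1) finite_subset by auto
    hence "(\<Prod>v\<in>T. l * a v) = l ^ card T * (\<Prod>v\<in>T. a v)" by (simp add: prod.distrib)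
    thus "l ^ card T / l ^ r * ((\<Prod>v\<in>T. a v) * (\<Prod>v\<in>M - T. 1 - a v)) =
         (\<Prod>v\<in>T. l * a v) * (\<Prod>v\<in>M - T. 1 - a v) / l ^ r" by simp
  qed
  also have "\<dots> = (\<Prod>v\<in>M. l * a v + (1 - a v)) / l ^ r"
    using prod_add[OF assms(1), of "\<lambda>v. l * a v" "\<lambda>v. 1 - a v"] by simp
  finally show ?thesis unfolding g_def .
qed

lemma num_bound:
  fixes p :: real and r n :: nat
  assumes "0 < p" "p < 1" "real r = p * real n"
  shows "(1 + ((1 + (1-p)/(2*p)) - 1) * p^2) ^ n / (1 + (1-p)/(2*p)) ^ r \<le> exp (- real r * (1-p)^2 / 4)"
proof -
  define l where "l = 1 + (1-p)/(2*p)"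
  have l1: "1 \<le> l" using assms unfolding l_def by simp
  have "(1 + (l - 1) * p^2) ^ n \<le> exp ((l - 1) * p^2) ^ n"
    using l1 by (intro power_mono) (auto simp: exp_ge_add_one_self add_nonneg_nonneg)
  also have "\<dots> = exp (real n * ((l - 1) * p^2))" by (simp add: exp_of_nat_mult)
  also have "real n * ((l - 1) * p^2) = real r * ((l - 1) * p)" using assms(3)
    by (simp add: power2_eq_square)
  finally have h1: "(1 + (l - 1) * p^2) ^ n \<le> exp (real r * ((l - 1) * p))" .
  have "1 / l ^ r = (1 / l) ^ r" by (simp add: power_one_over)
  also have "\<dots> \<le> exp (1/l - 1) ^ r"
    using l1 exp_ge_add_one_self[of "1/l - 1"] by (intro power_mono) auto
  also have "\<dots> = exp (real r * (1/l - 1))" by (simp add: exp_of_nat_mult)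
  finally have h2: "1 / l ^ r \<le> exp (real r * (1/l - 1))" .
  have "(1 + (l - 1) * p^2) ^ n / l ^ r = (1 + (l - 1) * p^2) ^ n * (1 / l ^ r)" by simp
  also have "\<dots> \<le> exp (real r * ((l - 1) * p)) * exp (real r * (1/l - 1))"
    using h1 h2 l1 by (intro mult_mono) (auto simp: add_nonneg_nonneg)
  also have "\<dots> = exp (real r * ((l - 1) * p + 1/l - 1))" by (simp add: exp_add[symmetric] algebra_simps)
  also have "\<dots> \<le> exp (- real r * (1-p)^2 / 4)"
  proof -
    have "(l - 1) * p + 1/l - 1 = - ((1-p)^2 / (2 * (1 + p)))"
    proof -
      have a1: "1/l = 2*p/(1+p)" using assms(1,2) unfolding l_def by (simp add: field_simps)
      have a2: "(l - 1) * p = (1-p)/2" using assms(1,2) unfolding l_def by (simp add: field_simps)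
      have "(1-p)/2 + 2*p/(1+p) - 1 = - ((1-p)^2 / (2 * (1 + p)))"
        using assms(1,2) by (simp add: field_simps power2_eq_square)
      thus ?thesis unfolding a1 a2 .
    qed
    also have "\<dots> \<le> - ((1-p)^2 / 4)"
    proof -
      have "(1-p)^2/4 \<le> (1-p)^2/(2*(1+p))" using assms(1,2) by (intro divide_left_mono) auto
      thus ?thesis by linarith
    qed
    finally have "(l - 1) * p + 1/l - 1 \<le> - ((1-p)^2 / 4)" .
    hence "real r * ((l - 1) * p + 1/l - 1) \<le> real r * (- ((1-p)^2 / 4))"
      by (intro mult_left_mono) auto
    thus ?thesis by simp
  qed
  finally show ?thesis unfolding l_def .
qed

lemma main_bound:
  fixes c1 c2 :: real and n k :: nat and V B :: "nat set" and d :: "nat \<Rightarrow> nat"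
  assumes c: "0 < c1" "c1 \<le> c2" "c2 < 1"
    and V: "finite V" "card V = n" "B \<subseteq> V" and n0: "0 < n"
    and d: "\<forall>v\<in>V. 2 \<le> d v \<and> d v \<le> n"
    and k: "c1 * real n \<le> real k" "real k \<le> c2 * real n"
  shows "measure_pmf.prob (out_nbhd_pmf V d) {N. card (reverse_reachable V N B) = k}
           \<le> exp (- (c1^2 * (1 - c2) / 4) * real n)"
proof -
  define P where "P = out_nbhd_pmf V d"
  define X where "X v = {T. T \<subseteq> V \<and> card T = d v}" for v
  have Xfin: "finite (X v)" for v using V(1) unfolding X_def by auto
  have Xne: "X v \<noteq> {}" if "v \<in> V" for v
  proof -
    have "card (X v) = n choose d v" using n_subsets[OF V(1)] V(2) unfolding X_def by simp
    moreover have "n choose d v > 0" using d that by simp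
    ultimately show ?thesis by force
  qed
  have Pdef: "P = Pi_pmf V {} (\<lambda>v. pmf_of_set (X v))"
    unfolding P_def out_nbhd_pmf_def X_def ..
  have "set_pmf P = PiE_dflt V {} (set_pmf \<circ> (\<lambda>v. pmf_of_set (X v)))"
    unfolding Pdef using V(1) by (rule set_Pi_pmf)
  also have "\<dots> = PiE_dflt V {} X"
    unfolding PiE_dflt_def using Xfin Xne by auto
  finally have setP: "set_pmf P = PiE_dflt V {} X" .
  have "c2 * real n < real n" using c(3) n0 by simp
  hence kn: "k < n" using k(2) by linarith
  have "0 < c1 * real n" using c(1) n0 by simp
  hence k0: "0 < k" using k(1) by linarith
  define r where "r = n - k"
  define p where "p = real r / real n"
  have p0: "0 < p" "p < 1" using kn k0 n0 unfolding p_def r_def by (auto simp: of_nat_diff)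
  have rp: "real r = p * real n" unfolding p_def using n0 by simp
  define q where "q v = real ((n - k) choose d v) / real (n choose d v)" for v
  have qle: "q v \<le> p ^ 2" if "v \<in> V" for v
  proof -
    have "real ((n-k) choose d v) * real n ^ 2 \<le> real (n choose d v) * real (n-k) ^ 2"
      using binom_ratio[of "n-k" n "d v"] d that by simp
    moreover have "real (n choose d v) > 0" using d that by simp
    ultimately show ?thesis unfolding q_def p_def r_def using n0
      by (simp add: field_simps power_divide)
  qed
  have q01: "0 \<le> q v \<and> q v \<le> 1" if "v \<in> V" for v
  proof -
    have "p ^ 2 \<le> 1" using p0 by (simp add: power_le_one)
    thus ?thesis using qle[OF that] unfolding q_def by simp
  qed
  define SS where "SS = {S. B \<subseteq> S \<and> S \<subseteq> V \<and> card S = k}"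
  have SSfin: "finite SS" by (rule finite_subset[of _ "Pow V"]) (auto simp: SS_def V(1))
  define E where "E S v = (if v \<in> S then (if v \<in> B then UNIV else UNIV - {T. T \<inter> S = {}}) else {T. T \<inter> S = {}})" for S v
  define ev where "ev S = PiE_dflt V {} (E S)" for S
  have step1: "{N. card (reverse_reachable V N B) = k} \<inter> set_pmf P \<subseteq> (\<Union>S\<in>SS. ev S)"
  proof
    fix N assume "N \<in> {N. card (reverse_reachable V N B) = k} \<inter> set_pmf P"
    hence cN: "card (reverse_reachable V N B) = k" and NP: "N \<in> PiE_dflt V {} X"
      using setP by auto
    define R where "R = reverse_reachable V N B"
    have Rdef: "u \<in> R \<longleftrightarrow> u \<in> V \<and> (\<exists>b\<in>B. (u, b) \<in> (edges V N)\<^sup>*)" for u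
      unfolding R_def reverse_reachable_def by auto
    have Nout: "x \<notin> V \<Longrightarrow> N x = {}" and Nin: "x \<in> V \<Longrightarrow> N x \<subseteq> V" for x
      using NP unfolding PiE_dflt_def X_def by auto
    have BR: "B \<subseteq> R" using V(3) Rdef by auto
    have RV: "R \<subseteq> V" using Rdef by auto
    have RSS: "R \<in> SS" unfolding SS_def using BR RV cN R_def by auto
    have "N \<in> ev R" unfolding ev_def PiE_dflt_def
    proof (intro CollectI allI conjI impI)
      fix x assume xV: "x \<in> V"
      show "N x \<in> E R x"
      proof (cases "x \<in> R")
        case True
        show ?thesis
        proof (cases "x \<in> B")
          case True then show ?thesis using \<open>x \<in> R\<close> unfolding E_def by auto
        next
          case False
          obtain b where b: "b \<in> B" "(x, b) \<in> (edges V N)\<^sup>*" using \<open>x \<in> R\<close> Rdef by auto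
          have "x \<noteq> b" using b False by auto
          then obtain y where y: "(x, y) \<in> edges V N" "(y, b) \<in> (edges V N)\<^sup>*"
            using b(2) by (metis converse_rtranclE)
          have "y \<in> N x" using y(1) unfolding edges_def by auto
          hence "y \<in> V" using Nin xV by auto
          hence "y \<in> R" using y(2) b(1) Rdef by auto
          hence "N x \<inter> R \<noteq> {}" using \<open>y \<in> N x\<close> by auto
          then show ?thesis using \<open>x \<in> R\<close> False unfolding E_def by auto
        qed
      next
        case False
        have "N x \<inter> R = {}"
        proof (rule ccontr)
          assume "N x \<inter> R \<noteq> {}"
          then obtain y where y: "y \<in> N x" "y \<in> R" by auto
          then obtain b where b: "b \<in> B" "(y, b) \<in> (edges V N)\<^sup>*" using Rdef by auto
          have "(x, y) \<in> edges V N" using y(1) xV unfolding edges_def by auto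
          hence "(x, b) \<in> (edges V N)\<^sup>*" using b(2) by (rule converse_rtrancl_into_rtrancl)
          hence "x \<in> R" using xV b(1) Rdef by auto
          thus False using False by simp
        qed
        then show ?thesis using False unfolding E_def by auto
      qed
    next
      fix x assume "x \<notin> V" thus "N x = {}" by (rule Nout)
    qed
    thus "N \<in> (\<Union>S\<in>SS. ev S)" using RSS by auto
  qed
  have "measure_pmf.prob P {N. card (reverse_reachable V N B) = k}
      = measure_pmf.prob P ({N. card (reverse_reachable V N B) = k} \<inter> set_pmf P)"
    by (simp add: measure_Int_set_pmf)
  also have "\<dots> \<le> measure_pmf.prob P (\<Union>S\<in>SS. ev S)"
    using step1 by (intro measure_pmf.finite_measure_mono) auto
  also have "\<dots> \<le> (\<Sum>S\<in>SS. measure_pmf.prob P (ev S))"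
    using SSfin by (intro measure_pmf.finite_measure_subadditive_finite) auto
  also have "\<dots> = (\<Sum>S\<in>SS. (\<Prod>v\<in>V-S. q v) * (\<Prod>v\<in>(V-B)-(V-S). 1 - q v))"
  proof (intro sum.cong refl)
    fix S assume S: "S \<in> SS"
    hence SV: "B \<subseteq> S" "S \<subseteq> V" "card S = k" unfolding SS_def by auto
    have f: "measure_pmf.prob (pmf_of_set (X v)) (E S v) =
        (if v \<in> V - S then q v else if v \<in> S - B then 1 - q v else 1)" if "v \<in> V" for v
    proof -
      have pa: "measure_pmf.prob (pmf_of_set (X v)) {T. T \<inter> S = {}} = q v"
        unfolding X_def q_def using prob_avoid[OF V(1) SV(2), of "d v"] d that V(2) SV(3) by simp
      show ?thesis
        using pa measure_pmf.prob_compl[of "{T. T \<inter> S = {}}" "pmf_of_set (X v)"] that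
        unfolding E_def by auto
    qed
    have "measure_pmf.prob P (ev S) = (\<Prod>v\<in>V. measure_pmf.prob (pmf_of_set (X v)) (E S v))"
      unfolding P_def out_nbhd_pmf_def ev_def X_def using V(1) by (rule measure_Pi_pmf_PiE_dflt)
    also have "\<dots> = (\<Prod>v\<in>V. (if v \<in> V - S then q v else if v \<in> S - B then 1 - q v else 1))"
      using f by (intro prod.cong) auto
    also have "\<dots> = (\<Prod>v\<in>V-S. q v) * (\<Prod>v\<in>S-B. 1 - q v)"
    proof -
      let ?g = "\<lambda>v. (if v \<in> V - S then q v else if v \<in> S - B then 1 - q v else 1)"
      have "prod ?g V = prod ?g (V - S) * prod ?g S" using prod.subset_diff[OF SV(2) V(1)] .
      moreover have "prod ?g S = prod ?g (S - B) * prod ?g B"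
        using prod.subset_diff[OF SV(1)] SV(2) V(1) finite_subset by blast
      moreover have "prod ?g B = 1" using SV by (intro prod.neutral) auto
      moreover have "prod ?g (V - S) = (\<Prod>v\<in>V-S. q v)" by (intro prod.cong) auto
      moreover have "prod ?g (S - B) = (\<Prod>v\<in>S-B. 1 - q v)" by (intro prod.cong) auto
      ultimately show ?thesis by simp
    qed
    also have "S - B = (V - B) - (V - S)" using SV by auto
    finally show "measure_pmf.prob P (ev S) = (\<Prod>v\<in>V-S. q v) * (\<Prod>v\<in>(V-B)-(V-S). 1 - q v)" .
  qed
  also have "\<dots> \<le> (\<Sum>T\<in>{T. T \<subseteq> V - B \<and> card T = r}. (\<Prod>v\<in>T. q v) * (\<Prod>v\<in>(V-B)-T. 1 - q v))"
  proof -
    let ?h = "\<lambda>T. (\<Prod>v\<in>T. q v) * (\<Prod>v\<in>(V-B)-T. 1 - q v)"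
    have inj: "inj_on (\<lambda>S. V - S) SS" unfolding SS_def by (rule inj_onI) auto
    have "(\<Sum>S\<in>SS. ?h (V - S)) = (\<Sum>T\<in>(\<lambda>S. V - S) ` SS. ?h T)"
      using sum.reindex[OF inj, of ?h] by simp
    also have "\<dots> \<le> (\<Sum>T\<in>{T. T \<subseteq> V - B \<and> card T = r}. ?h T)"
    proof (rule sum_mono2)
      show "finite {T. T \<subseteq> V - B \<and> card T = r}" using V(1) by auto
      show "(\<lambda>S. V - S) ` SS \<subseteq> {T. T \<subseteq> V - B \<and> card T = r}"
        unfolding SS_def r_def using V by (auto simp: card_Diff_subset finite_subset)
      show "0 \<le> ?h T" if "T \<in> {T. T \<subseteq> V - B \<and> card T = r} - (\<lambda>S. V - S) ` SS" for T
        using that q01 by (intro mult_nonneg_nonneg prod_nonneg) auto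
    qed
    finally show ?thesis .
  qed
  also have "\<dots> \<le> (\<Prod>v\<in>V-B. (1 + (1-p)/(2*p)) * q v + (1 - q v)) / (1 + (1-p)/(2*p)) ^ r"
    using q01 p0 V(1) by (intro gen_bound) auto
  also have "\<dots> \<le> (1 + ((1 + (1-p)/(2*p)) - 1) * p^2) ^ n / (1 + (1-p)/(2*p)) ^ r"
  proof (intro divide_right_mono)
    define l where "l = 1 + (1-p)/(2*p)"
    have l1: "1 \<le> l" using p0 unfolding l_def by simp
    have "(\<Prod>v\<in>V-B. l * q v + (1 - q v)) \<le> (\<Prod>v\<in>V-B. 1 + (l - 1) * p^2)"
    proof (intro prod_mono conjI)
      fix v assume "v \<in> V - B"
      hence "0 \<le> q v" "q v \<le> 1" "q v \<le> p^2" using q01 qle by auto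
      moreover have "(l - 1) * q v \<le> (l - 1) * p^2" using l1 \<open>q v \<le> p^2\<close> by (intro mult_left_mono) auto
      moreover have "0 \<le> (l - 1) * q v" using l1 \<open>0 \<le> q v\<close> by simp
      ultimately show "0 \<le> l * q v + (1 - q v)" "l * q v + (1 - q v) \<le> 1 + (l - 1) * p^2"
        by (simp_all add: algebra_simps)
    qed
    also have "\<dots> = (1 + (l - 1) * p^2) ^ card (V - B)" by simp
    also have "\<dots> \<le> (1 + (l - 1) * p^2) ^ n"
      using l1 V by (intro power_increasing) (auto simp: card_mono)
    finally show "(\<Prod>v\<in>V-B. (1 + (1-p)/(2*p)) * q v + (1 - q v)) \<le> (1 + ((1 + (1-p)/(2*p)) - 1) * p^2) ^ n"
      unfolding l_def .
    show "0 \<le> (1 + (1-p)/(2*p)) ^ r" using p0 by simp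
  qed
  also have "\<dots> \<le> exp (- real r * (1-p)^2 / 4)" using num_bound[OF p0 rp] .
  also have "\<dots> \<le> exp (- (c1^2 * (1 - c2) / 4) * real n)"
  proof -
    have "1 - p = real k / real n" unfolding p_def r_def using n0 kn by (simp add: field_simps of_nat_diff)
    moreover have "c1 \<le> real k / real n" using k(1) n0 by (simp add: pos_le_divide_eq)
    ultimately have "c1 \<le> 1 - p" by simp
    hence h1: "c1^2 \<le> (1-p)^2" using c(1) by (intro power_mono) auto
    have h2: "(1 - c2) * real n \<le> real r" unfolding r_def using k(2) kn by (simp add: of_nat_diff algebra_simps)
    have "c1^2 * ((1 - c2) * real n) \<le> (1-p)^2 * real r"
      using h1 h2 c by (intro mult_mono) auto
    thus ?thesis by (simp add: algebra_simps)
  qed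
  finally show ?thesis unfolding P_def .
qed

lemma exp_small:
  fixes c :: real
  assumes "0 < c"
  shows "\<exists>N. \<forall>n\<ge>N. exp (- c * real n) \<le> 1 / (real n)^2"
proof -
  have "eventually (\<lambda>n. exp (- c * real n) \<le> 1 / (real n)^2) sequentially"
    using assms by real_asymp
  thus ?thesis by (simp add: eventually_sequentially)
qed

theorem lemma14:
  fixes dmin dmax :: nat and c1 c2 :: real
  assumes "2 \<le> dmin" and "dmin \<le> dmax"
    and "0 < c1" and "c1 \<le> c2" and "c2 < 1"
  shows "\<exists>N0::nat. \<forall>n \<ge> N0. \<forall>(V::nat set) (B::nat set) (d::nat \<Rightarrow> nat) (k::nat).
           finite V \<longrightarrow> card V = n \<longrightarrow> B \<subseteq> V \<longrightarrow> real (card B) \<le> c2 * real n \<longrightarrow>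
           (\<forall>v\<in>V. dmin \<le> d v \<and> d v \<le> dmax) \<longrightarrow>
           c1 * real n \<le> real k \<longrightarrow> real k \<le> c2 * real n \<longrightarrow>
           measure_pmf.prob (out_nbhd_pmf V d)
             {N. card (reverse_reachable V N B) = k} \<le> 1 / (real n)\<^sup>2"
proof -
  define c where "c = c1^2 * (1 - c2) / 4"
  have "0 < c" using assms unfolding c_def by simp
  then obtain N1 where N1: "\<forall>n\<ge>N1. exp (- c * real n) \<le> 1 / (real n)^2"
    using exp_small by blast
  show ?thesis
  proof (rule exI[of _ "max N1 (dmax + 1)"], intro allI impI)
    fix n :: nat and V B :: "nat set" and d :: "nat \<Rightarrow> nat" and k :: nat
    assume n: "max N1 (dmax + 1) \<le> n" and V: "finite V" "card V = n" "B \<subseteq> V"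
      and "real (card B) \<le> c2 * real n" and dv: "\<forall>v\<in>V. dmin \<le> d v \<and> d v \<le> dmax"
      and k: "c1 * real n \<le> real k" "real k \<le> c2 * real n"
    have n0: "0 < n" using n by simp
    have d: "\<forall>v\<in>V. 2 \<le> d v \<and> d v \<le> n" using dv n assms(1) by force
    have "measure_pmf.prob (out_nbhd_pmf V d) {N. card (reverse_reachable V N B) = k}
           \<le> exp (- (c1^2 * (1 - c2) / 4) * real n)"
      using main_bound[OF assms(3,4,5) V n0 d k] .
    also have "\<dots> \<le> 1 / (real n)^2" using N1 n unfolding c_def by simp
    finally show "measure_pmf.prob (out_nbhd_pmf V d) {N. card (reverse_reachable V N B) = k}
           \<le> 1 / (real n)\<^sup>2" .
  qed
qed

end
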